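(* For every finite bounded commutative BCK-algebra $\mathcal A$ and each of the equations $x=1$ and $\neg x=1$ (in one variable $x$), either the degree of satisfiability of the equation in $\mathcal A$ equals $1$ or it is at most $\frac12$. Thus both equations have finite satisfiability gap $\frac12$ among bounded commutative BCK-algebras, and this value is realized by the two-element algebra $\mathcal C_2$ (with $1=1$).
   Context: A BCK-algebra is a set $A$ with a binary operation $\cdot$ and a constant $0$ such that for all $x,y,z\in A$: (BCK1) $((x\cdot y)\cdot(x\cdot z))\cdot(z\cdot y)=0$; (BCK2) $(x\cdot(x\cdot y))\cdot y=0$; (BCK3) $x\cdot x=0$; (BCK4) $0\cdot x=0$; (BCK5) $x\cdot y=0$ and $y\cdot x=0$ imply $x=y$. Define $x\wedge y:=y\cdot(y\cdot x)$; the algebra is commutative if $x\wedge y=y\wedge x$ for all $x,y$. A bounded BCK-algebra is a BCK-algebra with a distinguished element $1$ with $x\cdot 1=0$ for all $x$; $\neg x:=1\cdot x$. The degree of satisfiability of a one-variable equation $\varphi(x)$ in a finite algebra $M$ is $|\{a\in M:\varphi(a)\}|/|M|$. $\mathcal C_2$ is the BCK-algebra on $\{0,1\}$ with $x\cdot y=\max\{x-y,0\}$. *)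

theory Defs
  imports Complex_Main
begin

definition bck_algebra :: "'a set \<Rightarrow> ('a \<Rightarrow> 'a \<Rightarrow> 'a) \<Rightarrow> 'a \<Rightarrow> bool" where
  "bck_algebra A m z \<longleftrightarrow>
     z \<in> A \<and> (\<forall>x\<in>A. \<forall>y\<in>A. m x y \<in> A) \<and>
     (\<forall>x\<in>A. \<forall>y\<in>A. \<forall>w\<in>A. m (m (m x y) (m x w)) (m w y) = z) \<and>
     (\<forall>x\<in>A. \<forall>y\<in>A. m (m x (m x y)) y = z) \<and>
     (\<forall>x\<in>A. m x x = z) \<and>
     (\<forall>x\<in>A. m z x = z) \<and>
     (\<forall>x\<in>A. \<forall>y\<in>A. m x y = z \<and> m y x = z \<longrightarrow> x = y)"

definition bck_meet :: "('a \<Rightarrow> 'a \<Rightarrow> 'a) \<Rightarrow> 'a \<Rightarrow> 'a \<Rightarrow> 'a" where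
  "bck_meet m x y = m y (m y x)"

definition commutative_bck :: "'a set \<Rightarrow> ('a \<Rightarrow> 'a \<Rightarrow> 'a) \<Rightarrow> 'a \<Rightarrow> bool" where
  "commutative_bck A m z \<longleftrightarrow> bck_algebra A m z \<and>
     (\<forall>x\<in>A. \<forall>y\<in>A. bck_meet m x y = bck_meet m y x)"

definition bounded_bck :: "'a set \<Rightarrow> ('a \<Rightarrow> 'a \<Rightarrow> 'a) \<Rightarrow> 'a \<Rightarrow> 'a \<Rightarrow> bool" where
  "bounded_bck A m z u \<longleftrightarrow> bck_algebra A m z \<and> u \<in> A \<and> (\<forall>x\<in>A. m x u = z)"

definition bck_neg :: "('a \<Rightarrow> 'a \<Rightarrow> 'a) \<Rightarrow> 'a \<Rightarrow> 'a \<Rightarrow> 'a" where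
  "bck_neg m u x = m u x"

definition dos :: "'a set \<Rightarrow> ('a \<Rightarrow> bool) \<Rightarrow> real" where
  "dos A \<phi> = real (card {a\<in>A. \<phi> a}) / real (card A)"

text \<open>The two-element algebra C_2 on {0,1} with x.y = max(x-y,0) (truncated nat subtraction).\<close>
definition C2_carrier :: "nat set" where "C2_carrier = {0, 1}"
definition C2_op :: "nat \<Rightarrow> nat \<Rightarrow> nat" where "C2_op x y = x - y"

end

theory Submission
  imports Defs
begin

lemma dos_single:
  assumes "finite A" "u \<in> A" "{a\<in>A. P a} = {u}"
  shows "dos A P = 1 \<or> dos A P \<le> 1/2"
proof -
  have c: "card A \<ge> 1" using assms by (metis One_nat_def Suc_leI card_gt_0_iff empty_iff)
  show ?thesis
  proof (cases "card A = 1")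
    case True then show ?thesis using assms by (simp add: dos_def)
  next
    case False
    then have "real (card A) \<ge> 2" using c by linarith
    then show ?thesis using assms by (simp add: dos_def field_simps)
  qed
qed

lemma bck_x0:
  assumes "bck_algebra A m z" "x \<in> A"
  shows "m x z = x"
proof -
  have zA: "z \<in> A" and cl: "\<And>a b. a\<in>A \<Longrightarrow> b\<in>A \<Longrightarrow> m a b \<in> A"
    and a2: "\<forall>x\<in>A. \<forall>y\<in>A. m (m x (m x y)) y = z"
    and a3: "\<forall>x\<in>A. m x x = z"
    and a4: "\<forall>x\<in>A. m z x = z"
    and a5: "\<forall>x\<in>A. \<forall>y\<in>A. m x y = z \<and> m y x = z \<longrightarrow> x = y"
    using assms unfolding bck_algebra_def by auto
  have "m (m x (m x x)) x = z" using a2 assms(2) by blast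
  then have h1: "m (m x z) x = z" using a3 assms(2) by simp
  have h2: "m (m x (m x z)) z = z" using a2 assms(2) zA by blast
  have cA: "m x (m x z) \<in> A" using cl assms(2) zA by blast
  have "m z (m x (m x z)) = z" using a4 cA by blast
  then have h3: "m x (m x z) = z" using a5 h2 cA zA by blast
  have "m x z \<in> A" using cl assms(2) zA by blast
  then show ?thesis using a5 h1 h3 assms(2) by blast
qed

theorem proposition4p3:
  shows "(\<forall>(A :: 'a set) m z u.
            finite A \<and> bounded_bck A m z u \<and> commutative_bck A m z \<longrightarrow>
              (dos A (\<lambda>x. x = u) = 1 \<or> dos A (\<lambda>x. x = u) \<le> 1/2) \<and>
              (dos A (\<lambda>x. bck_neg m u x = u) = 1 \<or> dos A (\<lambda>x. bck_neg m u x = u) \<le> 1/2))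
         \<and> bounded_bck C2_carrier C2_op 0 1 \<and> commutative_bck C2_carrier C2_op 0
         \<and> dos C2_carrier (\<lambda>x. x = 1) = 1/2
         \<and> dos C2_carrier (\<lambda>x. bck_neg C2_op 1 x = 1) = 1/2"
proof (intro conjI allI impI)
  fix A :: "'a set" and m z u
  assume H: "finite A \<and> bounded_bck A m z u \<and> commutative_bck A m z"
  then have fin: "finite A" and B: "bck_algebra A m z" and uA: "u \<in> A"
    and top: "\<forall>x\<in>A. m x u = z"
    and com: "\<forall>x\<in>A. \<forall>y\<in>A. bck_meet m x y = bck_meet m y x"
    unfolding bounded_bck_def commutative_bck_def by auto
  have zA: "z \<in> A" and cl: "\<And>a b. a\<in>A \<Longrightarrow> b\<in>A \<Longrightarrow> m a b \<in> A"
    and xx: "\<And>a. a\<in>A \<Longrightarrow> m a a = z"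
    using B unfolding bck_algebra_def by auto
  show "dos A (\<lambda>x. x = u) = 1 \<or> dos A (\<lambda>x. x = u) \<le> 1/2"
  proof (rule dos_single[OF fin uA])
    show "{a\<in>A. a = u} = {u}" using uA by blast
  qed
  have inv: "m u (m u x) = x" if "x \<in> A" for x
  proof -
    have "m u (m u x) = bck_meet m x u" by (simp add: bck_meet_def)
    also have "\<dots> = bck_meet m u x" using com that uA by blast
    also have "\<dots> = m x (m x u)" by (simp add: bck_meet_def)
    also have "\<dots> = x" using top that bck_x0[OF B that] by simp
    finally show ?thesis .
  qed
  have S: "{a\<in>A. bck_neg m u a = u} = {z}"
  proof -
    have "a = z" if "a \<in> A" "m u a = u" for a
    proof -
      have "a = m u (m u a)" using inv[OF that(1)] by simp
      also have "\<dots> = m u u" using that(2) by simp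
      also have "\<dots> = z" using xx[OF uA] .
      finally show ?thesis .
    qed
    moreover have "m u z = u" using bck_x0[OF B uA] .
    ultimately show ?thesis using zA unfolding bck_neg_def by blast
  qed
  show "dos A (\<lambda>x. bck_neg m u x = u) = 1 \<or> dos A (\<lambda>x. bck_neg m u x = u) \<le> 1/2"
    by (rule dos_single[OF fin zA S])
next
  show "bounded_bck C2_carrier C2_op 0 1"
    by (simp add: bounded_bck_def bck_algebra_def C2_carrier_def C2_op_def)
  show "commutative_bck C2_carrier C2_op 0"
    by (simp add: commutative_bck_def bck_meet_def bck_algebra_def C2_carrier_def C2_op_def)
  have "{a\<in>C2_carrier. a = 1} = {1}" by (auto simp: C2_carrier_def)
  then show "dos C2_carrier (\<lambda>x. x = 1) = 1/2" by (simp add: dos_def C2_carrier_def)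
  have "{a\<in>C2_carrier. bck_neg C2_op 1 a = 1} = {0}"
    by (auto simp: C2_carrier_def bck_neg_def C2_op_def)
  then show "dos C2_carrier (\<lambda>x. bck_neg C2_op 1 x = 1) = 1/2" by (simp add: dos_def C2_carrier_def)
qed

end
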